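(* Let $\gamma\in\mathcal S_n$. Then $(\varepsilon,\varepsilon,\gamma;(12))\in\mathrm{Par}(n)$ if and only if the cycle structure of $\gamma$ is $2^r\cdot1^f$ for some integers $r\ge0$ and $f\ge1$; that is, $\gamma^2=\varepsilon$ and $\gamma$ has at least one fixed point.
   Context: A Latin square of order $n$ is an $n\times n$ array with rows, columns and symbols indexed by $[n]$, each symbol occurring once in each row and each column, with triple set $O(L)$. Permutations act on the right; $\varepsilon$ is the identity. A paratopism $(\alpha,\beta,\gamma;(12))$ maps $L$ to $L^\sigma$ with triple set $\{(y\beta,x\alpha,z\gamma):(x,y,z)\in O(L)\}$; it is an autoparatopism of $L$ if $L^\sigma=L$. $\mathrm{Par}(n)$ is the set of paratopisms that are autoparatopisms of at least one Latin square of order $n$. Cycle structure $c_1^{\lambda_1}\cdot c_2^{\lambda_2}\cdots$ means $\lambda_i$ cycles of length $c_i$, with fixed points counted as $1$-cycles. *)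

theory Defs
  imports "HOL-Combinatorics.Permutations"
begin

definition latin_square :: "nat \<Rightarrow> (nat \<times> nat \<times> nat) set \<Rightarrow> bool" where
  "latin_square n T \<longleftrightarrow>
     T \<subseteq> {1..n} \<times> {1..n} \<times> {1..n} \<and>
     (\<forall>x\<in>{1..n}. \<forall>y\<in>{1..n}. \<exists>!z. (x, y, z) \<in> T) \<and>
     (\<forall>x\<in>{1..n}. \<forall>z\<in>{1..n}. \<exists>!y. (x, y, z) \<in> T) \<and>
     (\<forall>y\<in>{1..n}. \<forall>z\<in>{1..n}. \<exists>!x. (x, y, z) \<in> T)"

text \<open>Image of a Latin square (triple set) under the paratopism
(alpha, beta, gamma; (12)); permutations act on the right, so x alpha = alpha x.\<close>
definition paratopism12 ::
  "(nat \<Rightarrow> nat) \<Rightarrow> (nat \<Rightarrow> nat) \<Rightarrow> (nat \<Rightarrow> nat) \<Rightarrow> (nat \<times> nat \<times> nat) set \<Rightarrow> (nat \<times> nat \<times> nat) set" where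
  "paratopism12 \<alpha> \<beta> \<gamma> T = {(\<beta> y, \<alpha> x, \<gamma> z) | x y z. (x, y, z) \<in> T}"

definition in_Par12 :: "nat \<Rightarrow> (nat \<Rightarrow> nat) \<Rightarrow> (nat \<Rightarrow> nat) \<Rightarrow> (nat \<Rightarrow> nat) \<Rightarrow> bool" where
  "in_Par12 n \<alpha> \<beta> \<gamma> \<longleftrightarrow> (\<exists>T. latin_square n T \<and> paratopism12 \<alpha> \<beta> \<gamma> T = T)"

end

theory Submission
  imports Defs
begin

lemma invol_decomp:
  fixes g :: "nat \<Rightarrow> nat"
  assumes fin: "finite A" and inv: "\<forall>x\<in>A. g x \<in> A \<and> g (g x) = x"
  shows "card A = card {x\<in>A. g x = x} + 2 * card {x\<in>A. x < g x}"
proof -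
  let ?F = "{x\<in>A. g x = x}" and ?H = "{x\<in>A. x < g x}" and ?K = "{x\<in>A. g x < x}"
  have A: "A = ?F \<union> ?H \<union> ?K" by auto
  have K: "?K = g ` ?H"
  proof
    show "?K \<subseteq> g ` ?H"
    proof
      fix x assume "x \<in> ?K"
      then have "g x \<in> ?H" "x = g (g x)" using inv by auto
      then show "x \<in> g ` ?H" by blast
    qed
    show "g ` ?H \<subseteq> ?K" using inv by auto
  qed
  have "inj_on g ?H"
  proof (rule inj_onI)
    fix x y assume "x \<in> ?H" "y \<in> ?H" "g x = g y"
    then have "g (g x) = g (g y)" "x \<in> A" "y \<in> A" by auto
    then show "x = y" using inv by simp
  qed
  then have cK: "card ?K = card ?H" using K card_image by simp
  have fF: "finite ?F" "finite ?H" "finite ?K" using fin by auto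
  have d1: "(?F \<union> ?H) \<inter> ?K = {}" by auto
  have d2: "?F \<inter> ?H = {}" by auto
  have "card A = card (?F \<union> ?H) + card ?K"
    using card_Un_disjoint[OF _ fF(3) d1] fF A by simp
  also have "card (?F \<union> ?H) = card ?F + card ?H"
    using card_Un_disjoint[OF fF(1,2) d2] .
  finally show ?thesis using cK by simp
qed


lemma invol_conj:
  fixes g1 g2 :: "nat \<Rightarrow> nat"
  assumes finA: "finite A" and finB: "finite B"
    and i1: "\<forall>x\<in>A. g1 x \<in> A \<and> g1 (g1 x) = x"
    and i2: "\<forall>x\<in>B. g2 x \<in> B \<and> g2 (g2 x) = x"
    and cAB: "card A = card B"
    and cH: "card {x\<in>A. x < g1 x} = card {x\<in>B. x < g2 x}"
  shows "\<exists>\<phi>. bij_betw \<phi> A B \<and> (\<forall>x\<in>A. \<phi> (g1 x) = g2 (\<phi> x))"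
proof -
  define F1 where "F1 = {x\<in>A. g1 x = x}"
  define F2 where "F2 = {x\<in>B. g2 x = x}"
  define H1 where "H1 = {x\<in>A. x < g1 x}"
  define H2 where "H2 = {x\<in>B. x < g2 x}"
  have cF: "card F1 = card F2"
    using invol_decomp[OF finA i1] invol_decomp[OF finB i2] cAB cH
    unfolding F1_def F2_def by linarith
  obtain e where e: "bij_betw e F1 F2"
    using finite_same_card_bij[OF _ _ cF] finA finB unfolding F1_def F2_def by auto
  obtain h where h: "bij_betw h H1 H2"
    using finite_same_card_bij[OF _ _ cH] finA finB unfolding H1_def H2_def by auto
  define \<phi> where "\<phi> x = (if x \<in> F1 then e x else if x \<in> H1 then h x else g2 (h (g1 x)))" for x
  have eF: "x \<in> F1 \<Longrightarrow> e x \<in> F2" for x using e bij_betwE by blast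
  have hH: "x \<in> H1 \<Longrightarrow> h x \<in> H2" for x using h bij_betwE by blast
  have F2sub: "F2 \<subseteq> B" "H2 \<subseteq> B" unfolding F2_def H2_def by auto
  have disj: "F2 \<inter> H2 = {}" unfolding F2_def H2_def by auto
  have restA: "g1 x \<in> H1 \<and> g1 x \<notin> F1" if "x \<in> A" "x \<notin> F1" "x \<notin> H1" for x
  proof -
    have "g1 x \<noteq> x" "\<not> x < g1 x" using that unfolding F1_def H1_def by auto
    then have "g1 x < x" by simp
    moreover have "g1 x \<in> A" "g1 (g1 x) = x" using i1 that(1) by auto
    ultimately show ?thesis unfolding F1_def H1_def by auto
  qed
  have c1: "\<phi> x \<in> F2" if "x \<in> F1" for x using that eF unfolding \<phi>_def by simp
  have c2: "\<phi> x \<in> H2" if "x \<notin> F1" "x \<in> H1" for x using that hH unfolding \<phi>_def by simp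
  have c3: "\<phi> x \<notin> F2 \<and> \<phi> x \<notin> H2 \<and> \<phi> x \<in> B \<and> \<phi> x = g2 (h (g1 x)) \<and> g1 x \<in> H1"
    if xA: "x \<in> A" and n: "x \<notin> F1" "x \<notin> H1" for x
  proof -
    have r: "g1 x \<in> H1" using restA[OF xA n] by auto
    have hb: "h (g1 x) \<in> H2" using hH[OF r] .
    then have hb2: "h (g1 x) \<in> B" "h (g1 x) < g2 (h (g1 x))" unfolding H2_def by auto
    moreover have "g2 (g2 (h (g1 x))) = h (g1 x)" using i2 hb2(1) by auto
    moreover have "g2 (h (g1 x)) \<in> B" using i2 hb2(1) by auto
    ultimately have "\<not> (g2 (h (g1 x)) < g2 (g2 (h (g1 x))))" "g2 (g2 (h (g1 x))) \<noteq> g2 (h (g1 x))"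
       "g2 (h (g1 x)) \<in> B" by auto
    moreover have "\<phi> x = g2 (h (g1 x))" using n unfolding \<phi>_def by simp
    ultimately show ?thesis using r unfolding F2_def H2_def by auto
  qed
  have comm: "\<forall>x\<in>A. \<phi> (g1 x) = g2 (\<phi> x)"
  proof
    fix x assume xA: "x \<in> A"
    show "\<phi> (g1 x) = g2 (\<phi> x)"
    proof (cases "x \<in> F1")
      case True
      have "g1 x = x" using True unfolding F1_def by simp
      moreover have "g2 (\<phi> x) = \<phi> x" using c1[OF True] unfolding F2_def by simp
      ultimately show ?thesis by simp
    next
      case nF: False
      show ?thesis
      proof (cases "x \<in> H1")
        case True
        have "g1 x \<in> A" "g1 (g1 x) = x" using i1 xA by auto
        moreover have "g1 x \<notin> F1" "g1 x \<notin> H1" using True i1 unfolding F1_def H1_def by auto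
        ultimately have "\<phi> (g1 x) = g2 (h x)" using c3[of "g1 x"] by simp
        moreover have "\<phi> x = h x" using nF True unfolding \<phi>_def by simp
        ultimately show ?thesis by simp
      next
        case False
        have r: "g1 x \<in> H1" "g1 x \<notin> F1" using restA[OF xA nF False] by auto
        have "h (g1 x) \<in> B" using hH[OF r(1)] unfolding H2_def by auto
        then have "g2 (g2 (h (g1 x))) = h (g1 x)" using i2 by simp
        moreover have "\<phi> (g1 x) = h (g1 x)" using r unfolding \<phi>_def by simp
        moreover have "\<phi> x = g2 (h (g1 x))" using c3[OF xA nF False] by simp
        ultimately show ?thesis by simp
      qed
    qed
  qed
  have into: "\<phi> x \<in> B" if "x \<in> A" for x
  proof -
    consider "x \<in> F1" | "x \<notin> F1" "x \<in> H1" | "x \<notin> F1" "x \<notin> H1" by blast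
    then show ?thesis
    proof cases
      case 1 then show ?thesis using c1 F2sub by blast
    next
      case 2 then show ?thesis using c2 F2sub by blast
    next
      case 3 then show ?thesis using c3[OF that] by metis
    qed
  qed
  have injF: "inj_on e F1" using e bij_betw_def by blast
  have injH: "inj_on h H1" using h bij_betw_def by blast
  have inj: "inj_on \<phi> A"
  proof (rule inj_onI)
    fix x y assume xA: "x \<in> A" and yA: "y \<in> A" and eq: "\<phi> x = \<phi> y"
    consider "x \<in> F1" | "x \<notin> F1" "x \<in> H1" | "x \<notin> F1" "x \<notin> H1" by blast
    then show "x = y"
    proof cases
      case 1
      have px: "\<phi> x \<in> F2" using c1 1 by simp
      have "y \<in> F1"
      proof (rule ccontr)
        assume ny: "y \<notin> F1"
        show False
        proof (cases "y \<in> H1")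
          case True then have "\<phi> y \<in> H2" using c2 ny by simp
          then show False using px eq disj by auto
        next
          case False then have "\<phi> y \<notin> F2" using c3[OF yA] ny by blast
          then show False using px eq by simp
        qed
      qed
      then show ?thesis using 1 eq injF unfolding \<phi>_def by (auto dest: inj_onD)
    next
      case 2
      have px: "\<phi> x \<in> H2" using c2 2 by simp
      have y2: "y \<notin> F1 \<and> y \<in> H1"
      proof (rule ccontr)
        assume ny: "\<not> (y \<notin> F1 \<and> y \<in> H1)"
        show False
        proof (cases "y \<in> F1")
          case True then have "\<phi> y \<in> F2" using c1 by simp
          then show False using px eq disj by auto
        next
          case False then have "\<phi> y \<notin> H2" using c3[OF yA] ny by blast
          then show False using px eq by simp
        qed
      qed
      have "h x = h y" using eq 2 y2 unfolding \<phi>_def by simp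
      then show ?thesis using 2 y2 injH by (auto dest: inj_onD)
    next
      case 3
      have px: "\<phi> x \<notin> F2" "\<phi> x \<notin> H2" using c3[OF xA 3] by blast+
      have y3: "y \<notin> F1" "y \<notin> H1"
      proof -
        show "y \<notin> F1"
        proof
          assume "y \<in> F1" then have "\<phi> y \<in> F2" using c1 by simp
          then show False using px eq by simp
        qed
        then show "y \<notin> H1"
          using c2[of y] px eq by auto
      qed
      have rx: "g1 x \<in> H1" using c3[OF xA 3] by blast
      have ry: "g1 y \<in> H1" using c3[OF yA y3] by blast
      have bx: "h (g1 x) \<in> B" "h (g1 y) \<in> B" using hH[OF rx] hH[OF ry] unfolding H2_def by auto
      have "g2 (h (g1 x)) = g2 (h (g1 y))" using eq c3[OF xA 3] c3[OF yA y3] by simp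
      then have "g2 (g2 (h (g1 x))) = g2 (g2 (h (g1 y)))" by simp
      then have "h (g1 x) = h (g1 y)" using bx i2 by simp
      then have "g1 x = g1 y" using injH rx ry by (auto dest: inj_onD)
      then have "g1 (g1 x) = g1 (g1 y)" by simp
      then show ?thesis using i1 xA yA by simp
    qed
  qed
  have "\<phi> ` A \<subseteq> B" using into by auto
  moreover have "card (\<phi> ` A) = card B" using card_image[OF inj] cAB by simp
  ultimately have "\<phi> ` A = B" using card_subset_eq finB by blast
  then have "bij_betw \<phi> A B" using inj bij_betw_def by blast
  then show ?thesis using comm by blast
qed


definition good :: "nat \<Rightarrow> nat \<Rightarrow> (nat \<Rightarrow> nat \<Rightarrow> nat) \<Rightarrow> (nat \<Rightarrow> nat) \<Rightarrow> bool" where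
  "good n r l g \<longleftrightarrow> (\<forall>x<n. \<forall>y<n. l x y < n) \<and> (\<forall>x<n. inj_on (l x) {..<n})
     \<and> (\<forall>x<n. \<forall>y<n. l y x = g (l x y)) \<and> (\<forall>s<n. g s < n \<and> g (g s) = s)
     \<and> card {s. s < n \<and> s < g s} = r"

lemma ex1_eq: "\<exists>!x. P x \<Longrightarrow> P a \<Longrightarrow> P b \<Longrightarrow> a = b" by blast

lemma good_Par:
  fixes \<gamma> :: "nat \<Rightarrow> nat"
  assumes good: "good n r l g" and perm: "\<gamma> permutes {1..n}" and inv: "\<gamma> \<circ> \<gamma> = id"
    and rdef: "card {x\<in>{1..n}. x < \<gamma> x} = r"
  shows "in_Par12 n id id \<gamma>"
proof -
  have lr: "\<And>x y. x < n \<Longrightarrow> y < n \<Longrightarrow> l x y < n"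
    and li: "\<And>x. x < n \<Longrightarrow> inj_on (l x) {..<n}"
    and ls: "\<And>x y. x < n \<Longrightarrow> y < n \<Longrightarrow> l y x = g (l x y)"
    and gi: "\<And>s. s < n \<Longrightarrow> g s < n \<and> g (g s) = s"
    and gc: "card {s. s < n \<and> s < g s} = r" using good unfolding good_def by blast+
  have i1: "\<forall>x\<in>{..<n}. g x \<in> {..<n} \<and> g (g x) = x" using gi by auto
  have gg: "\<gamma> (\<gamma> x) = x" for x using fun_cong[OF inv, of x] by simp
  have i2: "\<forall>x\<in>{1..n}. \<gamma> x \<in> {1..n} \<and> \<gamma> (\<gamma> x) = x"
    using permutes_in_image[OF perm] gg by blast
  have c1: "card {x\<in>{..<n}. x < g x} = r"
  proof -
    have "{x\<in>{..<n}. x < g x} = {s. s < n \<and> s < g s}" by auto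
    then show ?thesis using gc by simp
  qed
  obtain \<phi> where bij: "bij_betw \<phi> {..<n} {1..n}" and com: "\<forall>x\<in>{..<n}. \<phi> (g x) = \<gamma> (\<phi> x)"
    using invol_conj[OF _ _ i1 i2] c1 rdef by auto
  have \<phi>in: "s < n \<Longrightarrow> \<phi> s \<in> {1..n}" for s using bij bij_betwE by blast
  have \<phi>inj: "inj_on \<phi> {..<n}" using bij bij_betw_def by blast
  have \<phi>surj: "z \<in> {1..n} \<Longrightarrow> \<exists>s<n. \<phi> s = z" for z
    using bij_betw_imp_surj_on[OF bij] by (metis imageE lessThan_iff)
  have rowsurj: "x < n \<Longrightarrow> s < n \<Longrightarrow> \<exists>y<n. l x y = s" for x s
  proof -
    assume x: "x < n" and s: "s < n"
    have "l x ` {..<n} = {..<n}" by (rule endo_inj_surj) (use lr li x in auto)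
    then show ?thesis using s by (metis imageE lessThan_iff)
  qed
  define T where "T = {(x+1, y+1, \<phi> (l x y)) | x y. x < n \<and> y < n}"
  have memTI: "(x+1, y+1, \<phi> (l x y)) \<in> T" if "x < n" "y < n" for x y
    unfolding T_def using that by blast
  have memTD: "\<exists>x y. x < n \<and> y < n \<and> a = x+1 \<and> b = y+1 \<and> c = \<phi> (l x y)" if "(a, b, c) \<in> T" for a b c
    using that unfolding T_def by blast
  have valeq: "l x y = s" if "x < n" "y < n" "s < n" "\<phi> (l x y) = \<phi> s" for x y s
    using \<phi>inj lr[OF that(1,2)] that(3,4) by (auto dest: inj_onD)
  have memTsub: "a \<in> {1..n} \<and> b \<in> {1..n} \<and> c \<in> {1..n}" if "(a, b, c) \<in> T" for a b c
  proof -
    from memTD[OF that] obtain x y where "x < n" "y < n" "a = x+1" "b = y+1" "c = \<phi> (l x y)" by blast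
    then show ?thesis using \<phi>in[OF lr] by simp
  qed
  have dec: "\<exists>x0. x0 < n \<and> a = x0 + 1" if "a \<in> {1..n}" for a
    using that by (intro exI[of _ "a - 1"]) auto
  have rowu: "\<exists>!b. (x0+1, b, z) \<in> T" if x0: "x0 < n" and z: "z \<in> {1..n}" for x0 z
  proof -
    obtain s where s: "s < n" "\<phi> s = z" using \<phi>surj[OF z] by blast
    obtain y where y: "y < n" "l x0 y = s" using rowsurj[OF x0 s(1)] by blast
    show ?thesis
    proof
      show "(x0+1, y+1, z) \<in> T" using memTI[OF x0 y(1)] y s by simp
    next
      fix b assume "(x0+1, b, z) \<in> T"
      then obtain x' y' where h: "x' < n" "y' < n" "x0+1 = x'+1" "b = y'+1" "z = \<phi> (l x' y')"
        using memTD by blast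
      then have "l x0 y' = s" using valeq[of x0 y' s] s x0 by simp
      then have "l x0 y' = l x0 y" using y by simp
      then show "b = y + 1" using inj_onD[OF li[OF x0]] y h by simp
    qed
  qed
  have colu: "\<exists>!a. (a, y0+1, z) \<in> T" if y0: "y0 < n" and z: "z \<in> {1..n}" for y0 z
  proof -
    obtain s where s: "s < n" "\<phi> s = z" using \<phi>surj[OF z] by blast
    have gs: "g s < n" using gi s(1) by blast
    obtain x where x: "x < n" "l y0 x = g s" using rowsurj[OF y0 gs] by blast
    have "l x y0 = g (l y0 x)" using ls[OF y0 x(1)] .
    then have lx: "l x y0 = s" using x gi s by simp
    show ?thesis
    proof
      show "(x+1, y0+1, z) \<in> T" using memTI[OF x(1) y0] lx s by simp
    next
      fix a assume "(a, y0+1, z) \<in> T"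
      then obtain x' y' where h: "x' < n" "y' < n" "a = x'+1" "y0+1 = y'+1" "z = \<phi> (l x' y')"
        using memTD by blast
      then have "l x' y0 = s" using valeq[of x' y0 s] s y0 by simp
      then have "l y0 x' = g s" using ls[OF h(1) y0] by simp
      then have "l y0 x' = l y0 x" using x by simp
      then show "a = x + 1" using inj_onD[OF li[OF y0]] x h by simp
    qed
  qed
  have latin: "latin_square n T"
    unfolding latin_square_def
  proof (intro conjI ballI)
    show "T \<subseteq> {1..n} \<times> {1..n} \<times> {1..n}"
    proof
      fix t assume "t \<in> T"
      then show "t \<in> {1..n} \<times> {1..n} \<times> {1..n}" using memTsub by (cases t) auto
    qed
  next
    fix x y assume x: "x \<in> {1..n}" and y: "y \<in> {1..n}"
    obtain x0 where x0: "x0 < n" "x = x0 + 1" using dec[OF x] by blast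
    obtain y0 where y0: "y0 < n" "y = y0 + 1" using dec[OF y] by blast
    show "\<exists>!z. (x, y, z) \<in> T"
    proof
      show "(x, y, \<phi> (l x0 y0)) \<in> T" using memTI[OF x0(1) y0(1)] x0 y0 by simp
    next
      fix z assume "(x, y, z) \<in> T"
      then obtain x' y' where h: "x' < n" "y' < n" "x = x'+1" "y = y'+1" "z = \<phi> (l x' y')"
        using memTD by blast
      then show "z = \<phi> (l x0 y0)" using x0 y0 by simp
    qed
  next
    fix x z assume x: "x \<in> {1..n}" and z: "z \<in> {1..n}"
    obtain x0 where x0: "x0 < n" "x = x0 + 1" using dec[OF x] by blast
    show "\<exists>!y. (x, y, z) \<in> T" using rowu[OF x0(1) z] x0(2) by simp
  next
    fix y z assume y: "y \<in> {1..n}" and z: "z \<in> {1..n}"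
    obtain y0 where y0: "y0 < n" "y = y0 + 1" using dec[OF y] by blast
    show "\<exists>!x. (x, y, z) \<in> T" using colu[OF y0(1) z] y0(2) by simp
  qed
  have key: "\<gamma> (\<phi> (l x y)) = \<phi> (l y x)" if "x < n" "y < n" for x y
    using com lr[OF that] ls[OF that] by simp
  have par: "paratopism12 id id \<gamma> T = T"
  proof
    show "paratopism12 id id \<gamma> T \<subseteq> T"
    proof
      fix t assume "t \<in> paratopism12 id id \<gamma> T"
      then obtain a b c where t: "t = (b, a, \<gamma> c)" and abc: "(a, b, c) \<in> T"
        unfolding paratopism12_def by auto
      obtain x y where h: "x < n" "y < n" "a = x+1" "b = y+1" "c = \<phi> (l x y)"
        using memTD[OF abc] by blast
      have "t = (y+1, x+1, \<phi> (l y x))" using t h key by simp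
      then show "t \<in> T" using memTI[OF h(2) h(1)] by simp
    qed
  next
    show "T \<subseteq> paratopism12 id id \<gamma> T"
    proof
      fix t assume "t \<in> T"
      then obtain x y where h: "x < n" "y < n" "t = (x+1, y+1, \<phi> (l x y))"
        unfolding T_def by blast
      have m: "(y+1, x+1, \<phi> (l y x)) \<in> T" using memTI[OF h(2) h(1)] .
      have "t = (id (x+1), id (y+1), \<gamma> (\<phi> (l y x)))" using h key[OF h(2) h(1)] by simp
      then show "t \<in> paratopism12 id id \<gamma> T" unfolding paratopism12_def using m by blast
    qed
  qed
  show ?thesis unfolding in_Par12_def using latin par by blast
qed

lemma Par_forward:
  fixes \<gamma> :: "nat \<Rightarrow> nat"
  assumes n: "n \<ge> 1" and perm: "\<gamma> permutes {1..n}" and P: "in_Par12 n id id \<gamma>"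
  shows "\<gamma> \<circ> \<gamma> = id \<and> (\<exists>x\<in>{1..n}. \<gamma> x = x)"
proof -
  obtain T where L: "latin_square n T" and E: "paratopism12 id id \<gamma> T = T"
    using P unfolding in_Par12_def by blast
  have sub: "T \<subseteq> {1..n} \<times> {1..n} \<times> {1..n}"
    and u1: "\<forall>x\<in>{1..n}. \<forall>y\<in>{1..n}. \<exists>!z. (x, y, z) \<in> T"
    and u2: "\<forall>x\<in>{1..n}. \<forall>z\<in>{1..n}. \<exists>!y. (x, y, z) \<in> T"
    using L unfolding latin_square_def by auto
  have sw: "(y, x, \<gamma> z) \<in> T" if "(x, y, z) \<in> T" for x y z
  proof -
    have "(y, x, \<gamma> z) \<in> paratopism12 id id \<gamma> T" unfolding paratopism12_def using that by force
    then show ?thesis using E by simp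
  qed
  have gg: "\<gamma> (\<gamma> z) = z" for z
  proof (cases "z \<in> {1..n}")
    case True
    have one: "(1::nat) \<in> {1..n}" using n by simp
    have "\<exists>!y. (1, y, z) \<in> T" using u2 True one by blast
    then obtain y where y: "(1, y, z) \<in> T" by blast
    have yin: "y \<in> {1..n}" using y sub by auto
    have "(1, y, \<gamma> (\<gamma> z)) \<in> T" using sw[OF sw[OF y]] .
    moreover have "\<exists>!z. (1, y, z) \<in> T" using u1 one yin by blast
    ultimately show ?thesis using y ex1_eq[of "\<lambda>z. (1, y, z) \<in> T"] by blast
  next
    case False
    then have "\<gamma> z = z" using perm permutes_not_in by metis
    then show ?thesis by simp
  qed
  have one: "(1::nat) \<in> {1..n}" using n by simp
  have "\<exists>!z. (1, 1, z) \<in> T" using u1 one by blast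
  then obtain z where z: "(1, 1, z) \<in> T" by blast
  have zin: "z \<in> {1..n}" using z sub by auto
  have "(1, 1, \<gamma> z) \<in> T" using sw[OF z] .
  moreover have "\<exists>!z. (1, 1, z) \<in> T" using u1 one by blast
  ultimately have "\<gamma> z = z" using z ex1_eq[of "\<lambda>z. (1, 1, z) \<in> T"] by blast
  then show ?thesis using gg zin by auto
qed


definition addm :: "nat \<Rightarrow> nat \<Rightarrow> nat \<Rightarrow> nat" where
  "addm m a b = (if a + b < m then a + b else a + b - m)"
definition subm :: "nat \<Rightarrow> nat \<Rightarrow> nat \<Rightarrow> nat" where
  "subm m a b = (if b \<le> a then a - b else a + m - b)"

lemma addm_lt: "a < m \<Longrightarrow> b < m \<Longrightarrow> addm m a b < m"
  unfolding addm_def by auto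
lemma subm_lt: "a < m \<Longrightarrow> b < m \<Longrightarrow> subm m a b < m"
  unfolding subm_def by auto
lemma addm_comm: "addm m a b = addm m b a"
  unfolding addm_def by (simp add: add.commute)
lemma subm_neg: "a < m \<Longrightarrow> b < m \<Longrightarrow> subm m 0 (subm m a b) = subm m b a"
  unfolding subm_def by auto
lemma subm_inj1: "a1 < m \<Longrightarrow> a2 < m \<Longrightarrow> b < m \<Longrightarrow> subm m a1 b = subm m a2 b \<Longrightarrow> a1 = a2"
  unfolding subm_def by (auto split: if_splits)
lemma addm_inj2: "a < m \<Longrightarrow> b1 < m \<Longrightarrow> b2 < m \<Longrightarrow> addm m a b1 = addm m a b2 \<Longrightarrow> b1 = b2"
  unfolding addm_def by (auto split: if_splits)
lemma addm_double_inj: "odd m \<Longrightarrow> a < m \<Longrightarrow> b < m \<Longrightarrow> addm m a a = addm m b b \<Longrightarrow> a = b"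
  unfolding addm_def by (auto split: if_splits) presburger+
lemma subm_cross: "x < m \<Longrightarrow> y < m \<Longrightarrow> j < m \<Longrightarrow> subm m y x = subm m j (addm m x x) \<Longrightarrow> addm m x y = j"
  unfolding subm_def addm_def by (auto split: if_splits)


definition lP :: "nat \<Rightarrow> nat \<Rightarrow> nat \<Rightarrow> nat \<Rightarrow> nat" where
  "lP m k x y = (if x < m then (if y < m then (if addm m x y < k then m + addm m x y else subm m y x)
      else subm m (y - m) (addm m x x))
    else (if y < m then subm m (addm m y y) (x - m) else m + addm k (x - m) (y - m)))"

definition gP :: "nat \<Rightarrow> nat \<Rightarrow> nat" where
  "gP m s = (if s < m then subm m 0 s else s)"

lemma P_range: assumes "k \<le> m" "x < m + k" "y < m + k" shows "lP m k x y < m + k"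
proof (cases "x < m")
  case x: True
  show ?thesis
  proof (cases "y < m")
    case y: True
    then show ?thesis using x subm_lt[OF y x] unfolding lP_def by auto
  next
    case y: False
    have j: "y - m < m" using assms y by linarith
    show ?thesis using x y subm_lt[OF j addm_lt[OF x x]] unfolding lP_def by auto
  qed
next
  case x: False
  have j: "x - m < m" "x - m < k" using assms x by linarith+
  show ?thesis
  proof (cases "y < m")
    case y: True
    show ?thesis using x y subm_lt[OF addm_lt[OF y y] j(1)] unfolding lP_def by auto
  next
    case y: False
    have "y - m < k" using assms y by linarith
    then show ?thesis using x y addm_lt[OF j(2)] unfolding lP_def by auto
  qed
qed

lemma gP_lt: "s < m \<Longrightarrow> gP m s < m \<and> gP m s = subm m 0 s"
  unfolding gP_def using subm_lt[of 0 m s] by auto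

lemma P_sym: assumes "k \<le> m" "x < m + k" "y < m + k" shows "lP m k y x = gP m (lP m k x y)"
proof (cases "x < m")
  case x: True
  show ?thesis
  proof (cases "y < m")
    case y: True
    show ?thesis
    proof (cases "addm m x y < k")
      case True
      then show ?thesis using x y addm_comm[of m x y] unfolding lP_def gP_def by simp
    next
      case False
      then have "lP m k x y = subm m y x" "lP m k y x = subm m x y" using x y addm_comm[of m x y]
        unfolding lP_def by auto
      then show ?thesis using gP_lt[OF subm_lt[OF y x]] subm_neg[OF y x] by simp
    qed
  next
    case y: False
    have j: "y - m < m" using assms y by linarith
    have a: "addm m x x < m" using addm_lt[OF x x] .
    have "lP m k x y = subm m (y - m) (addm m x x)" "lP m k y x = subm m (addm m x x) (y - m)"
      using x y unfolding lP_def by auto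
    then show ?thesis using gP_lt[OF subm_lt[OF j a]] subm_neg[OF j a] by simp
  qed
next
  case x: False
  show ?thesis
  proof (cases "y < m")
    case y: True
    have j: "x - m < m" using assms x by linarith
    have a: "addm m y y < m" using addm_lt[OF y y] .
    have "lP m k x y = subm m (addm m y y) (x - m)" "lP m k y x = subm m (x - m) (addm m y y)"
      using x y unfolding lP_def by auto
    then show ?thesis using gP_lt[OF subm_lt[OF a j]] subm_neg[OF a j] by simp
  next
    case y: False
    then show ?thesis using x addm_comm[of k "x - m" "y - m"] unfolding lP_def gP_def by simp
  qed
qed

lemma P_g: "s < m + k \<Longrightarrow> gP m s < m + k \<and> gP m (gP m s) = s"
  unfolding gP_def subm_def by (auto split: if_splits)


lemma P_inj_aux:
  assumes om: "odd m" and km: "k \<le> m" and x: "x < m + k" and y1: "y1 < m + k" and y2: "y2 < m + k"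
    and eq: "lP m k x y1 = lP m k x y2"
  shows "y1 = y2"
proof (cases "x < m")
  case xm: True
  have vA: "lP m k x y = m + addm m x y" if "y < m" "addm m x y < k" for y
    using that xm unfolding lP_def by simp
  have vB: "lP m k x y = subm m y x \<and> subm m y x < m" if "y < m" "\<not> addm m x y < k" for y
    using that xm subm_lt[OF that(1) xm] unfolding lP_def by simp
  have vC: "lP m k x y = subm m (y - m) (addm m x x) \<and> subm m (y - m) (addm m x x) < m \<and> y - m < m"
    if "\<not> y < m" "y < m + k" for y
  proof -
    have "y - m < m" using that km by linarith
    then show ?thesis using that xm subm_lt[OF _ addm_lt[OF xm xm]] unfolding lP_def by simp
  qed
  consider (A) "y1 < m" "addm m x y1 < k" | (B) "y1 < m" "\<not> addm m x y1 < k" | (C) "\<not> y1 < m" by blast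
  then show ?thesis
  proof cases
    case A
    consider (A) "y2 < m" "addm m x y2 < k" | (B) "y2 < m" "\<not> addm m x y2 < k" | (C) "\<not> y2 < m" by blast
    then show ?thesis
    proof cases
      case A2: A
      then show ?thesis using A eq vA[OF A] vA[OF A2] addm_inj2[OF xm A(1) A2(1)] by simp
    next
      case B2: B
      then show ?thesis using A eq vA[OF A] vB[OF B2] by simp
    next
      case C2: C
      then show ?thesis using A eq vA[OF A] vC[OF C2 y2] by simp
    qed
  next
    case B
    consider (A) "y2 < m" "addm m x y2 < k" | (B) "y2 < m" "\<not> addm m x y2 < k" | (C) "\<not> y2 < m" by blast
    then show ?thesis
    proof cases
      case A2: A
      then show ?thesis using B eq vA[OF A2] vB[OF B] by simp
    next
      case B2: B
      then show ?thesis using B eq vB[OF B] vB[OF B2] subm_inj1[OF B(1) B2(1) xm] by simp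
    next
      case C2: C
      have "subm m y1 x = subm m (y2 - m) (addm m x x)" using eq vB[OF B] vC[OF C2 y2] by simp
      then have "addm m x y1 = y2 - m" using subm_cross[OF xm B(1)] vC[OF C2 y2] by simp
      then show ?thesis using B C2 y2 by linarith
    qed
  next
    case C
    consider (A) "y2 < m" "addm m x y2 < k" | (B) "y2 < m" "\<not> addm m x y2 < k" | (C) "\<not> y2 < m" by blast
    then show ?thesis
    proof cases
      case A2: A
      then show ?thesis using C eq vA[OF A2] vC[OF C y1] by simp
    next
      case B2: B
      have "subm m y2 x = subm m (y1 - m) (addm m x x)" using eq vB[OF B2] vC[OF C y1] by simp
      then have "addm m x y2 = y1 - m" using subm_cross[OF xm B2(1)] vC[OF C y1] by simp
      then show ?thesis using B2 C y1 by linarith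
    next
      case C2: C
      have "y1 - m = y2 - m" using eq vC[OF C y1] vC[OF C2 y2] subm_inj1[of "y1 - m" m "y2 - m" "addm m x x"]
          addm_lt[OF xm xm] by simp
      then show ?thesis using C C2 by linarith
    qed
  qed
next
  case xm: False
  have j: "x - m < m" "x - m < k" using x km xm by linarith+
  have vA: "lP m k x y = subm m (addm m y y) (x - m) \<and> subm m (addm m y y) (x - m) < m" if "y < m" for y
    using that xm subm_lt[OF addm_lt[OF that that] j(1)] unfolding lP_def by simp
  have vB: "lP m k x y = m + addm k (x - m) (y - m) \<and> y - m < k" if "\<not> y < m" "y < m + k" for y
    using that xm unfolding lP_def by simp
  show ?thesis
  proof (cases "y1 < m")
    case A: True
    show ?thesis
    proof (cases "y2 < m")
      case A2: True
      have "addm m y1 y1 = addm m y2 y2"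
        using eq vA[OF A] vA[OF A2] subm_inj1[OF addm_lt[OF A A] addm_lt[OF A2 A2] j(1)] by simp
      then show ?thesis using addm_double_inj[OF om A A2] by simp
    next
      case B2: False
      then show ?thesis using eq vA[OF A] vB[OF B2 y2] by simp
    qed
  next
    case B: False
    show ?thesis
    proof (cases "y2 < m")
      case A2: True
      then show ?thesis using eq vA[OF A2] vB[OF B y1] by simp
    next
      case B2: False
      have "y1 - m = y2 - m" using eq vB[OF B y1] vB[OF B2 y2] addm_inj2[OF j(2)] by simp
      then show ?thesis using B B2 by linarith
    qed
  qed
qed

lemma P_card: assumes "m = 2 * r + 1" shows "card {s. s < m + k \<and> s < gP m s} = r"
proof -
  have "{s. s < m + k \<and> s < gP m s} = {1..r}"
    using assms unfolding gP_def subm_def by auto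
  then show ?thesis by simp
qed

lemma good_P: assumes "m = 2 * r + 1" "k \<le> m" shows "good (m + k) r (lP m k) (gP m)"
  unfolding good_def
proof (intro conjI allI impI)
  show "lP m k x y < m + k" if "x < m + k" "y < m + k" for x y using P_range assms that by blast
  show "inj_on (lP m k x) {..<m + k}" if "x < m + k" for x
    by (rule inj_onI) (use P_inj_aux[of m k x] assms that in auto)
  show "lP m k y x = gP m (lP m k x y)" if "x < m + k" "y < m + k" for x y using P_sym assms that by blast
  show "gP m s < m + k" if "s < m + k" for s using P_g that by blast
  show "gP m (gP m s) = s" if "s < m + k" for s using P_g that by blast
  show "card {s. s < m + k \<and> s < gP m s} = r" using P_card assms by blast
qed


definition tau :: "nat \<Rightarrow> nat \<Rightarrow> nat" where
  "tau r s = (if s mod 4 = 1 \<and> s div 4 < r then s + 2 else if s mod 4 = 3 \<and> s div 4 < r then s - 2 else s)"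

definition lE :: "nat \<Rightarrow> nat \<Rightarrow> nat \<Rightarrow> nat \<Rightarrow> nat" where
  "lE n r x y = (if even x \<or> even (addm n x y) then addm n x y else tau r (addm n x y))"

lemma m4_decomp: "s = 4 * (s div 4) + s mod (4::nat)" by simp

lemma m4a: "s mod 4 = (1::nat) \<Longrightarrow> (s + 2) mod 4 = 3 \<and> (s + 2) div 4 = s div 4"
proof -
  assume h: "s mod 4 = 1"
  have e: "s + 2 = 4 * (s div 4) + 3" using m4_decomp[of s] h by linarith
  show ?thesis unfolding e by simp
qed
lemma m4b: "s mod 4 = (3::nat) \<Longrightarrow> (s - 2) mod 4 = 1 \<and> (s - 2) div 4 = s div 4 \<and> s \<ge> 2"
proof -
  assume h: "s mod 4 = 3"
  have e: "s - 2 = 4 * (s div 4) + 1" "s \<ge> 2" using m4_decomp[of s] h by linarith+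
  show ?thesis unfolding e(1) using e(2) by simp
qed
lemma m4c: "s mod 4 = (1::nat) \<Longrightarrow> s div 4 < r \<Longrightarrow> 4 * r \<le> n \<Longrightarrow> s + 2 < n"
proof -
  assume h: "s mod 4 = 1" "s div 4 < r" "4 * r \<le> n"
  have "s = 4 * (s div 4) + 1" using m4_decomp[of s] h by linarith
  then show ?thesis using h by linarith
qed
lemma m4d: "s mod 4 = (1::nat) \<or> s mod 4 = 3 \<Longrightarrow> odd s"
proof -
  assume h: "s mod 4 = 1 \<or> s mod 4 = 3"
  obtain q where "s = 4 * q + 1 \<or> s = 4 * q + 3" using m4_decomp[of s] h by (metis)
  then show ?thesis by auto
qed
lemma tau_cases: "(s mod 4 = 1 \<and> s div 4 < r \<and> tau r s = s + 2) \<or> (s mod 4 = 3 \<and> s div 4 < r \<and> tau r s = s - 2)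
   \<or> (\<not> (s mod 4 = 1 \<and> s div 4 < r) \<and> \<not> (s mod 4 = 3 \<and> s div 4 < r) \<and> tau r s = s)"
  unfolding tau_def by auto

lemma tau_even: "even s \<Longrightarrow> tau r s = s"
  using tau_cases[of s r] m4d[of s] by auto

lemma tau_parity: "even (tau r s) = even s"
proof -
  consider "s mod 4 = 1 \<and> s div 4 < r \<and> tau r s = s + 2" | "s mod 4 = 3 \<and> s div 4 < r \<and> tau r s = s - 2"
    | "tau r s = s" using tau_cases[of s r] by blast
  then show ?thesis
  proof cases
    case 1 then show ?thesis by simp
  next
    case 2 then show ?thesis using m4b[of s] by (simp add: even_diff_nat)
  next
    case 3 then show ?thesis by simp
  qed
qed

lemma tau_inv: "tau r (tau r s) = s"
proof -
  consider "s mod 4 = 1 \<and> s div 4 < r \<and> tau r s = s + 2" | "s mod 4 = 3 \<and> s div 4 < r \<and> tau r s = s - 2"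
    | "\<not> (s mod 4 = 1 \<and> s div 4 < r) \<and> \<not> (s mod 4 = 3 \<and> s div 4 < r) \<and> tau r s = s" using tau_cases[of s r] by blast
  then show ?thesis
  proof cases
    case 1 then show ?thesis using m4a[of s] unfolding tau_def by simp
  next
    case 2 then show ?thesis using m4b[of s] unfolding tau_def by (simp; linarith)
  next
    case 3 then show ?thesis by simp
  qed
qed

lemma tau_lt: "4 * r \<le> n \<Longrightarrow> s < n \<Longrightarrow> tau r s < n"
  using tau_cases[of s r] m4c[of s r n] by auto

lemma E_range: "0 < n \<Longrightarrow> 4 * r \<le> n \<Longrightarrow> x < n \<Longrightarrow> y < n \<Longrightarrow> lE n r x y < n"
  unfolding lE_def using addm_lt[of x n y] tau_lt[of r n "addm n x y"] by auto

lemma E_inj_aux: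
  assumes "4 * r \<le> n" "x < n" "y1 < n" "y2 < n" "lE n r x y1 = lE n r x y2"
  shows "y1 = y2"
proof -
  have "addm n x y1 = addm n x y2"
  proof (cases "even x")
    case True then show ?thesis using assms(5) unfolding lE_def by simp
  next
    case False
    let ?a = "addm n x y1" and ?b = "addm n x y2"
    have e: "(if even ?a then ?a else tau r ?a) = (if even ?b then ?b else tau r ?b)"
      using assms(5) False unfolding lE_def by simp
    have "even ?a = even ?b"
    proof -
      have "even (if even ?a then ?a else tau r ?a) = even ?a" using tau_parity by simp
      moreover have "even (if even ?b then ?b else tau r ?b) = even ?b" using tau_parity by simp
      ultimately show ?thesis using e by simp
    qed
    show ?thesis
    proof (cases "even ?a")
      case True
      then have "even ?b" using \<open>even ?a = even ?b\<close> by simp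
      then show ?thesis using e True by simp
    next
      case False
      then have "odd ?b" using \<open>even ?a = even ?b\<close> by simp
      then have "tau r ?a = tau r ?b" using e False by simp
      then have "tau r (tau r ?a) = tau r (tau r ?b)" by simp
      then show ?thesis using tau_inv by simp
    qed
  qed
  then show ?thesis using addm_inj2[OF assms(2,3,4)] by simp
qed

lemma addm_parity: assumes "even n" shows "even (addm n x y) = (even x = even y)"
proof (cases "x + y < n")
  case True then show ?thesis unfolding addm_def by simp
next
  case False
  then have "addm n x y = x + y - n" unfolding addm_def by simp
  moreover have "even (x + y - n) = even (x + y + n)" using False by simp
  ultimately show ?thesis using assms by simp
qed

lemma E_sym:
  assumes "even n" "x < n" "y < n"
  shows "lE n r y x = tau r (lE n r x y)"
proof -
  let ?s = "addm n x y"
  have c: "addm n y x = ?s" using addm_comm by metis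
  have p: "even ?s = (even x = even y)" using addm_parity[OF assms(1)] .
  have L1: "lE n r x y = (if even x \<or> even ?s then ?s else tau r ?s)" unfolding lE_def by simp
  have L2: "lE n r y x = (if even y \<or> even ?s then ?s else tau r ?s)" unfolding lE_def c by simp
  show ?thesis
  proof (cases "even ?s")
    case True
    then show ?thesis using L1 L2 tau_even[OF True] by simp
  next
    case False
    then have "even x \<noteq> even y" using p by simp
    then consider "even x" "odd y" | "odd x" "even y" by blast
    then show ?thesis
    proof cases
      case 1 then show ?thesis using L1 L2 False by simp
    next
      case 2 then show ?thesis using L1 L2 False tau_inv[of r ?s] by simp
    qed
  qed
qed

lemma E_card: assumes "4 * r \<le> n" shows "card {s. s < n \<and> s < tau r s} = r"
proof -
  have "{s. s < n \<and> s < tau r s} = (\<lambda>i. 4 * i + 1) ` {..<r}"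
  proof
    show "{s. s < n \<and> s < tau r s} \<subseteq> (\<lambda>i. 4 * i + 1) ` {..<r}"
    proof
      fix s assume "s \<in> {s. s < n \<and> s < tau r s}"
      then have "s < tau r s" by simp
      then have "s mod 4 = 1 \<and> s div 4 < r" using tau_cases[of s r] by auto
      then have "s = 4 * (s div 4) + 1 \<and> s div 4 < r" using m4_decomp[of s] by linarith
      then show "s \<in> (\<lambda>i. 4 * i + 1) ` {..<r}" by blast
    qed
    show "(\<lambda>i. 4 * i + 1) ` {..<r} \<subseteq> {s. s < n \<and> s < tau r s}"
    proof
      fix s assume "s \<in> (\<lambda>i. 4 * i + 1) ` {..<r}"
      then obtain i where i: "i < r" "s = 4 * i + 1" by blast
      then have "tau r s = s + 2" unfolding tau_def by simp
      moreover have "s < n" using i assms by linarith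
      ultimately show "s \<in> {s. s < n \<and> s < tau r s}" by simp
    qed
  qed
  moreover have "inj_on (\<lambda>i. 4 * i + 1::nat) {..<r}" by (rule inj_onI) simp
  ultimately show ?thesis using card_image[of "\<lambda>i. 4 * i + 1::nat" "{..<r}"] by simp
qed

lemma good_E: assumes "even n" "0 < n" "4 * r \<le> n" shows "good n r (lE n r) (tau r)"
  unfolding good_def
proof (intro conjI allI impI)
  show "lE n r x y < n" if "x < n" "y < n" for x y using E_range assms that by blast
  show "inj_on (lE n r x) {..<n}" if "x < n" for x
    by (rule inj_onI) (use E_inj_aux[of r n x] assms that in auto)
  show "lE n r y x = tau r (lE n r x y)" if "x < n" "y < n" for x y using E_sym assms that by blast
  show "tau r s < n" if "s < n" for s using tau_lt assms that by blast
  show "tau r (tau r s) = s" if "s < n" for s using tau_inv by blast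
  show "card {s. s < n \<and> s < tau r s} = r" using E_card assms by blast
qed


definition intri :: "nat \<Rightarrow> nat \<Rightarrow> bool" where
  "intri r s \<longleftrightarrow> s mod 4 \<noteq> 3 \<and> s div 4 < r"

definition gA :: "nat \<Rightarrow> nat \<Rightarrow> nat" where
  "gA t j = (if j = 0 then (if t = 0 then 1 else if odd t then 2 else 0)
     else if j = 1 then (if t = 0 then 2 else if t = 1 then 0 else 1)
     else (if t = 1 then 1 else if t = 0 \<or> odd t then 0 else 2))"

definition lA :: "nat \<Rightarrow> nat \<Rightarrow> nat \<Rightarrow> nat \<Rightarrow> nat" where
  "lA n r x y = (if intri r (addm n x y)
     then 4 * (addm n x y div 4) + gA (subm n x (2 * (addm n x y div 4))) (addm n x y mod 4)
     else addm n x y)"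

definition swp :: "nat \<Rightarrow> nat \<Rightarrow> nat" where
  "swp r s = (if intri r s \<and> s mod 4 = 0 then s + 2 else if intri r s \<and> s mod 4 = 2 then s - 2 else s)"

lemma gA_le: "gA t j \<le> 2"
  unfolding gA_def by auto

lemma gA_inj: "j1 \<le> 2 \<Longrightarrow> j2 \<le> 2 \<Longrightarrow> gA t j1 = gA t j2 \<Longrightarrow> j1 = j2"
  unfolding gA_def by (auto split: if_splits)

lemma gA_sym:
  assumes on: "odd n" and t: "t < n" and w: "w < n" and j: "j \<le> 2"
    and tw: "t + w = j \<or> t + w = j + n"
  shows "gA w j = 2 - gA t j"
proof -
  consider "j = 0" | "j = 1" | "j = 2" using j by linarith
  then show ?thesis
  proof cases
    case 1
    show ?thesis
    proof (cases "t + w = j")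
      case True then have "t = 0" "w = 0" using 1 by auto
      then show ?thesis using 1 unfolding gA_def by simp
    next
      case False
      then have "t + w = j + n" using tw by blast
      then have e: "t + w = n" using 1 by simp
      then have "t \<noteq> 0" "w \<noteq> 0" using t w by auto
      moreover have "odd (t + w)" using e on by simp
      then have "odd t = even w" by auto
      ultimately show ?thesis using 1 unfolding gA_def by auto
    qed
  next
    case 2
    show ?thesis
    proof (cases "t + w = j")
      case True then have "(t = 0 \<and> w = 1) \<or> (t = 1 \<and> w = 0)" using 2 by auto
      then show ?thesis using 2 unfolding gA_def by auto
    next
      case False
      then have "t + w = j + n" using tw by blast
      then have e: "t + w = n + 1" using 2 by simp
      then have "t \<ge> 2" "w \<ge> 2" using t w by auto
      then show ?thesis using 2 unfolding gA_def by auto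
    qed
  next
    case 3
    show ?thesis
    proof (cases "t + w = j")
      case True then have "(t = 0 \<and> w = 2) \<or> (t = 1 \<and> w = 1) \<or> (t = 2 \<and> w = 0)" using 3 by auto
      then show ?thesis using 3 unfolding gA_def by auto
    next
      case False
      then have "t + w = j + n" using tw by blast
      then have e: "t + w = n + 2" using 3 by simp
      then have "t \<ge> 3" "w \<ge> 3" using t w by auto
      moreover have "odd (t + w)" using e on by simp
      then have "odd t = even w" by auto
      ultimately show ?thesis using 3 unfolding gA_def by auto
    qed
  qed
qed


lemma divmod4: "c < 4 \<Longrightarrow> (4 * i + c) div 4 = i \<and> (4 * i + c) mod 4 = (c::nat)"
  by simp

lemma intri_dec: "intri r s \<Longrightarrow> s = 4 * (s div 4) + s mod 4 \<and> s mod 4 \<le> 2 \<and> s div 4 < r"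
  unfolding intri_def using m4_decomp[of s] by auto

lemma A_val:
  assumes "intri r (addm n x y)"
  shows "lA n r x y = 4 * (addm n x y div 4) + gA (subm n x (2 * (addm n x y div 4))) (addm n x y mod 4)
    \<and> lA n r x y div 4 = addm n x y div 4
    \<and> lA n r x y mod 4 = gA (subm n x (2 * (addm n x y div 4))) (addm n x y mod 4)
    \<and> intri r (lA n r x y)"
proof -
  let ?i = "addm n x y div 4" and ?c = "gA (subm n x (2 * (addm n x y div 4))) (addm n x y mod 4)"
  have v: "lA n r x y = 4 * ?i + ?c" using assms unfolding lA_def by simp
  have c0: "?c \<le> 2" by (rule gA_le)
  then have c: "?c < 4" "?c \<noteq> 3" by linarith+
  have d: "(4 * ?i + ?c) div 4 = ?i" "(4 * ?i + ?c) mod 4 = ?c" using divmod4[OF c(1)] by auto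
  have "?i < r" using assms unfolding intri_def by simp
  then have "intri r (4 * ?i + ?c)" unfolding intri_def using d c by simp
  then show ?thesis using v d by simp
qed

lemma A_nval: "\<not> intri r (addm n x y) \<Longrightarrow> lA n r x y = addm n x y"
  unfolding lA_def by simp

lemma A_range:
  assumes "4 * r < n" "x < n" "y < n"
  shows "lA n r x y < n"
proof (cases "intri r (addm n x y)")
  case True
  have i: "addm n x y div 4 < r" using True unfolding intri_def by simp
  have "lA n r x y \<le> 4 * (addm n x y div 4) + 2" using A_val[OF True] gA_le by simp
  then show ?thesis using i assms(1) by linarith
next
  case False
  then show ?thesis using A_nval addm_lt assms(2,3) by simp
qed

lemma A_inj_aux:
  assumes "4 * r < n" "x < n" "y1 < n" "y2 < n" "lA n r x y1 = lA n r x y2"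
  shows "y1 = y2"
proof -
  let ?s1 = "addm n x y1" and ?s2 = "addm n x y2"
  have "?s1 = ?s2"
  proof (cases "intri r ?s1")
    case T1: True
    show ?thesis
    proof (cases "intri r ?s2")
      case T2: True
      have a1: "lA n r x y1 div 4 = ?s1 div 4" "lA n r x y1 mod 4 = gA (subm n x (2 * (?s1 div 4))) (?s1 mod 4)"
        using A_val[OF T1] by blast+
      have a2: "lA n r x y2 div 4 = ?s2 div 4" "lA n r x y2 mod 4 = gA (subm n x (2 * (?s2 div 4))) (?s2 mod 4)"
        using A_val[OF T2] by blast+
      have i: "?s1 div 4 = ?s2 div 4" using a1(1) a2(1) assms(5) by simp
      have "gA (subm n x (2 * (?s1 div 4))) (?s1 mod 4) = gA (subm n x (2 * (?s1 div 4))) (?s2 mod 4)"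
        using a1(2) a2(2) assms(5) i by simp
      then have "?s1 mod 4 = ?s2 mod 4" using gA_inj intri_dec[OF T1] intri_dec[OF T2] by blast
      then show ?thesis using i m4_decomp[of ?s1] m4_decomp[of ?s2] by linarith
    next
      case F2: False
      have "intri r (lA n r x y1)" using A_val[OF T1] by blast
      then show ?thesis using A_nval[OF F2] assms(5) F2 by simp
    qed
  next
    case F1: False
    show ?thesis
    proof (cases "intri r ?s2")
      case T2: True
      have "intri r (lA n r x y2)" using A_val[OF T2] by blast
      then show ?thesis using A_nval[OF F1] assms(5) F1 by simp
    next
      case F2: False
      then show ?thesis using A_nval[OF F1] A_nval[OF F2] assms(5) by simp
    qed
  qed
  then show ?thesis using addm_inj2[OF assms(2,3,4)] by simp
qed

lemma tw_lemma:
  assumes "x < n" "y < n" "addm n x y = 4 * i + j"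
  shows "subm n x (2 * i) + subm n y (2 * i) = j \<or> subm n x (2 * i) + subm n y (2 * i) = j + n"
  using assms unfolding addm_def subm_def by (auto split: if_splits)

lemma swp_val: "c \<le> 2 \<Longrightarrow> i < r \<Longrightarrow> swp r (4 * i + c) = 4 * i + (2 - c)"
proof -
  assume c: "c \<le> 2" and i: "i < r"
  have d: "(4 * i + c) div 4 = i" "(4 * i + c) mod 4 = c" using divmod4[of c i] c by auto
  then have it: "intri r (4 * i + c)" unfolding intri_def using c i by simp
  consider "c = 0" | "c = 1" | "c = 2" using c by linarith
  then show ?thesis
  proof cases
    case 1 then show ?thesis using it d unfolding swp_def by simp
  next
    case 2 then show ?thesis using it d unfolding swp_def by simp
  next
    case 3 then show ?thesis using it d unfolding swp_def by simp
  qed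
qed

lemma A_sym:
  assumes on: "odd n" and rn: "4 * r < n" and x: "x < n" and y: "y < n"
  shows "lA n r y x = swp r (lA n r x y)"
proof -
  let ?s = "addm n x y"
  have c: "addm n y x = ?s" using addm_comm by metis
  show ?thesis
  proof (cases "intri r ?s")
    case True
    let ?i = "?s div 4" and ?j = "?s mod 4"
    have T2: "intri r (addm n y x)" using True c by simp
    have dec: "?s = 4 * ?i + ?j" "?j \<le> 2" "?i < r" using intri_dec[OF True] by auto
    let ?t = "subm n x (2 * ?i)" and ?w = "subm n y (2 * ?i)"
    have i2: "2 * ?i < n" using dec rn by linarith
    have tw: "?t + ?w = ?j \<or> ?t + ?w = ?j + n" using tw_lemma[OF x y dec(1)] .
    have tl: "?t < n" "?w < n" using subm_lt[OF x i2] subm_lt[OF y i2] by auto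
    have g: "gA ?w ?j = 2 - gA ?t ?j" using gA_sym[OF on tl dec(2) tw] .
    have v1: "lA n r x y = 4 * ?i + gA ?t ?j" using A_val[OF True] by simp
    have v2: "lA n r y x = 4 * ?i + gA ?w ?j" using A_val[OF T2] c by simp
    show ?thesis using v1 v2 g swp_val[OF gA_le dec(3)] by simp
  next
    case False
    have "swp r ?s = ?s" using False unfolding swp_def by simp
    then show ?thesis using A_nval[OF False] A_nval[of r n y x] False c by simp
  qed
qed

lemma swp_cases: "(intri r s \<and> s mod 4 = 0 \<and> swp r s = s + 2) \<or> (intri r s \<and> s mod 4 = 2 \<and> swp r s = s - 2)
   \<or> (\<not> (intri r s \<and> s mod 4 = 0) \<and> \<not> (intri r s \<and> s mod 4 = 2) \<and> swp r s = s)"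
  unfolding swp_def by auto

lemma swp_inv_lt: assumes "4 * r < n" "s < n" shows "swp r s < n \<and> swp r (swp r s) = s"
proof (cases "intri r s \<and> s mod 4 = 0")
  case 1: True
  have d: "s = 4 * (s div 4) + 0" "s div 4 < r" using intri_dec[of r s] 1 by auto
  have A: "swp r s = 4 * (s div 4) + 2" using swp_val[of 0 "s div 4" r] d by simp
  have C: "swp r (4 * (s div 4) + 2) = 4 * (s div 4) + 0" using swp_val[of 2 "s div 4" r] d by simp
  have B: "swp r (swp r s) = 4 * (s div 4) + 0" unfolding A using C .
  show ?thesis using A B d assms by linarith
next
  case n1: False
  show ?thesis
  proof (cases "intri r s \<and> s mod 4 = 2")
    case 2: True
    have d: "s = 4 * (s div 4) + 2" "s div 4 < r" using intri_dec[of r s] 2 by auto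
    have e: "swp r (4 * (s div 4) + 2) = 4 * (s div 4) + (2 - 2)" using swp_val[of 2 "s div 4" r] d by simp
    have A: "swp r s = 4 * (s div 4) + 0" using e d(1) by simp
    have C: "swp r (4 * (s div 4) + 0) = 4 * (s div 4) + 2" using swp_val[of 0 "s div 4" r] d by simp
    have B: "swp r (swp r s) = 4 * (s div 4) + 2" unfolding A using C .
    show ?thesis using A B d assms by linarith
  next
    case False
    then have "swp r s = s" using n1 unfolding swp_def by auto
    then show ?thesis using assms by simp
  qed
qed

lemma A_card: assumes "4 * r < n" shows "card {s. s < n \<and> s < swp r s} = r"
proof -
  have "{s. s < n \<and> s < swp r s} = (\<lambda>i. 4 * i) ` {..<r}"
  proof
    show "{s. s < n \<and> s < swp r s} \<subseteq> (\<lambda>i. 4 * i) ` {..<r}"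
    proof
      fix s assume "s \<in> {s. s < n \<and> s < swp r s}"
      then have "s < swp r s" by simp
      then have "intri r s \<and> s mod 4 = 0" using swp_cases[of r s] by auto
      then have "s = 4 * (s div 4) \<and> s div 4 < r" using intri_dec[of r s] by auto
      then show "s \<in> (\<lambda>i. 4 * i) ` {..<r}" by blast
    qed
    show "(\<lambda>i. 4 * i) ` {..<r} \<subseteq> {s. s < n \<and> s < swp r s}"
    proof
      fix s assume "s \<in> (\<lambda>i. 4 * i) ` {..<r}"
      then obtain i where i: "i < r" "s = 4 * i" by blast
      then have "swp r s = s + 2" using swp_val[of 0 i r] by simp
      moreover have "s < n" using i assms by linarith
      ultimately show "s \<in> {s. s < n \<and> s < swp r s}" by simp
    qed
  qed
  moreover have "inj_on (\<lambda>i. 4 * i::nat) {..<r}" by (rule inj_onI) simp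
  ultimately show ?thesis using card_image[of "\<lambda>i. 4 * i::nat" "{..<r}"] by simp
qed

lemma good_A: assumes "odd n" "4 * r < n" shows "good n r (lA n r) (swp r)"
  unfolding good_def
proof (intro conjI allI impI)
  show "lA n r x y < n" if "x < n" "y < n" for x y using A_range assms that by blast
  show "inj_on (lA n r x) {..<n}" if "x < n" for x
    by (rule inj_onI) (use A_inj_aux[of r n x] assms that in auto)
  show "lA n r y x = swp r (lA n r x y)" if "x < n" "y < n" for x y using A_sym assms that by blast
  show "swp r s < n" if "s < n" for s using swp_inv_lt assms that by blast
  show "swp r (swp r s) = s" if "s < n" for s using swp_inv_lt assms that by blast
  show "card {s. s < n \<and> s < swp r s} = r" using A_card assms by blast
qed

lemma exists_good: assumes "2 * r < n" shows "\<exists>l g. good n r l g"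
proof (cases "n \<le> 4 * r + 2")
  case True
  define m where "m = 2 * r + 1"
  define k where "k = n - m"
  have km1: "k \<le> m" using True assms unfolding m_def k_def by linarith
  have km2: "n = m + k" using True assms unfolding m_def k_def by linarith
  note km = km1 km2
  show ?thesis using good_P[OF m_def km(1)] km(2) by metis
next
  case False
  show ?thesis
  proof (cases "even n")
    case True
    have "0 < n" "4 * r \<le> n" using False by linarith+
    then show ?thesis using good_E[OF True] by blast
  next
    case odd: False
    have "4 * r < n" using False by linarith
    then show ?thesis using good_A[OF odd] by blast
  qed
qed

theorem theorem4p7:
  fixes n :: nat and \<gamma> :: "nat \<Rightarrow> nat"
  assumes "n \<ge> 1"
    and "\<gamma> permutes {1..n}"
  shows "in_Par12 n id id \<gamma> \<longleftrightarrow> (\<gamma> \<circ> \<gamma> = id \<and> (\<exists>x\<in>{1..n}. \<gamma> x = x))"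
proof
  assume "in_Par12 n id id \<gamma>"
  then show "\<gamma> \<circ> \<gamma> = id \<and> (\<exists>x\<in>{1..n}. \<gamma> x = x)" using Par_forward assms by blast
next
  assume h: "\<gamma> \<circ> \<gamma> = id \<and> (\<exists>x\<in>{1..n}. \<gamma> x = x)"
  then obtain x0 where x0: "x0 \<in> {1..n}" "\<gamma> x0 = x0" by blast
  have gg: "\<gamma> (\<gamma> x) = x" for x using fun_cong[OF conjunct1[OF h], of x] by simp
  have i2: "\<forall>x\<in>{1..n}. \<gamma> x \<in> {1..n} \<and> \<gamma> (\<gamma> x) = x"
    using permutes_in_image[OF assms(2)] gg by blast
  define r where "r = card {x\<in>{1..n}. x < \<gamma> x}"
  have dec: "n = card {x\<in>{1..n}. \<gamma> x = x} + 2 * r"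
    using invol_decomp[OF _ i2] unfolding r_def by simp
  have "card {x\<in>{1..n}. \<gamma> x = x} \<noteq> 0" using x0 by auto
  then have "2 * r < n" using dec by linarith
  then obtain l g where "good n r l g" using exists_good by blast
  then show "in_Par12 n id id \<gamma>" using good_Par assms(2) h r_def by blast
qed

end
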